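(* Let $m\geq 2$ and $G=T^+_{m,1}$ with root $r$, stem $r'$, and children $r_1,\dots,r_m$ of $r$. If $S$ is a Type II set for $G$, then $N_G[r]\setminus\mathcal{P}^\infty(S)=\{r',r_i\}$ for some $i\in[m]$. Furthermore, for all $k\ge 0$, $$H^k_{m,1}=\langle\mathcal{H}^{1}\oplus\mathcal{E}^{m-1}\rangle^k_{m,0}\quad\text{and}\quad E^k_{m,1}=\langle\mathcal{H}^{0}\oplus\mathcal{E}^{m}\rangle^k_{m,0}+\sum_{\ell=0}^{m}\langle\mathcal{H}^{\ell}\oplus\mathcal{E}^{m-\ell}\rangle^{k-1}_{m,0}.$$
   Context: Power domination: for a graph $G=(V,E)$ and $S\subseteq V$, $\mathcal{P}^0(S)=N[S]$ and for $k\ge1$, $\mathcal{P}^k(S)=\mathcal{P}^{k-1}(S)\cup N^*(\mathcal{P}^{k-1}(S))$, where $x\in N^*(A)$ iff some $a\in A$ has $x$ as its only neighbor not in $A$; $\mathcal{P}^\infty(S)$ is the stable value (the set of observed vertices), and $S$ is a power dominating set if $\mathcal{P}^\infty(S)=V$. $T_{m,h}$ is the complete $m$-ary tree of height $h$ rooted at $r$; $T^+_{m,h}$ is $T_{m,h}$ plus a new vertex $r'$ (stem) joined to $r$. For $G=T^+_{m,h}$, a set $S\subseteq V(G)\setminus\{r'\}$ is Type I if it is a power dominating set for $G$; Type II if it is not but $S\cup\{r'\}$ is; Type 0 otherwise. $E^k_{m,h}$ and $H^k_{m,h}$ denote the numbers of Type I and Type II sets of size $k$ for $T^+_{m,h}$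 (zero for $k<0$). Define $$\langle\mathcal{H}^{\ell}\oplus\mathcal{E}^{m-\ell}\rangle^k_{m,h}=\sum \binom{m}{\ell}\binom{\ell}{s_0,\dots,s_k}\binom{m-\ell}{t_0,\dots,t_k}\Big(\prod_{j=1}^{\ell}H^{i_j}_{m,h}\Big)\Big(\prod_{j=\ell+1}^{m}E^{i_j}_{m,h}\Big),$$ the sum over all tuples of nonnegative integers $(i_1,\dots,i_m)$ with $i_1\le\cdots\le i_\ell$, $i_{\ell+1}\le\cdots\le i_m$, and $i_1+\cdots+i_m=k$, where $s_\alpha=|\{j\in[\ell]:i_j=\alpha\}|$ and $t_\beta=|\{j\in[\ell+1,m]:i_j=\beta\}|$ (empty sum $=0$ for $k<0$). *)

theory Defs
  imports Main
begin

definition cnbhd :: "'a set \<Rightarrow> ('a \<Rightarrow> 'a \<Rightarrow> bool) \<Rightarrow> 'a set \<Rightarrow> 'a set" where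
  "cnbhd V adj S = S \<union> {x \<in> V. \<exists>s\<in>S. adj s x}"

definition Nstar :: "'a set \<Rightarrow> ('a \<Rightarrow> 'a \<Rightarrow> bool) \<Rightarrow> 'a set \<Rightarrow> 'a set" where
  "Nstar V adj A = {x \<in> V. x \<notin> A \<and>
     (\<exists>a\<in>A. adj a x \<and> (\<forall>y\<in>V. adj a y \<and> y \<notin> A \<longrightarrow> y = x))}"

fun Pk :: "'a set \<Rightarrow> ('a \<Rightarrow> 'a \<Rightarrow> bool) \<Rightarrow> nat \<Rightarrow> 'a set \<Rightarrow> 'a set" where
  "Pk V adj 0 S = cnbhd V adj S"
| "Pk V adj (Suc k) S = Pk V adj k S \<union> Nstar V adj (Pk V adj k S)"

definition Pinf :: "'a set \<Rightarrow> ('a \<Rightarrow> 'a \<Rightarrow> bool) \<Rightarrow> 'a set \<Rightarrow> 'a set" where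
  "Pinf V adj S = (\<Union>k. Pk V adj k S)"

definition power_dom :: "'a set \<Rightarrow> ('a \<Rightarrow> 'a \<Rightarrow> bool) \<Rightarrow> 'a set \<Rightarrow> bool" where
  "power_dom V adj S \<longleftrightarrow> S \<subseteq> V \<and> Pinf V adj S = V"

text \<open>Vertices: None is the stem r'; Some xs is the tree vertex reached from the root
  r = Some [] by the child-index path xs (entries < m, length \<le> h).
  The children of r are r_i = Some [i], i < m.\<close>

definition Vt :: "nat \<Rightarrow> nat \<Rightarrow> nat list option set" where
  "Vt m h = insert None (Some ` {xs. length xs \<le> h \<and> (\<forall>x\<in>set xs. x < m)})"

definition adjt :: "nat \<Rightarrow> nat \<Rightarrow> nat list option \<Rightarrow> nat list option \<Rightarrow> bool" where
  "adjt m h u v \<longleftrightarrow> u \<in> Vt m h \<and> v \<in> Vt m h \<and>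
     ((u = None \<and> v = Some []) \<or> (v = None \<and> u = Some []) \<or>
      (\<exists>xs i. i < m \<and> u = Some xs \<and> v = Some (xs @ [i])) \<or>
      (\<exists>xs i. i < m \<and> v = Some xs \<and> u = Some (xs @ [i])))"

definition typeI :: "nat \<Rightarrow> nat \<Rightarrow> nat list option set \<Rightarrow> bool" where
  "typeI m h S \<longleftrightarrow> S \<subseteq> Vt m h - {None} \<and> power_dom (Vt m h) (adjt m h) S"

definition typeII :: "nat \<Rightarrow> nat \<Rightarrow> nat list option set \<Rightarrow> bool" where
  "typeII m h S \<longleftrightarrow> S \<subseteq> Vt m h - {None} \<and> \<not> power_dom (Vt m h) (adjt m h) S
      \<and> power_dom (Vt m h) (adjt m h) (insert None S)"

text \<open>Counts of Type I / Type II sets of size k (k an integer; zero for k < 0).\<close>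
definition Ecount :: "nat \<Rightarrow> nat \<Rightarrow> int \<Rightarrow> nat" where
  "Ecount m h k = card {S. typeI m h S \<and> int (card S) = k}"

definition Hcount :: "nat \<Rightarrow> nat \<Rightarrow> int \<Rightarrow> nat" where
  "Hcount m h k = card {S. typeII m h S \<and> int (card S) = k}"

text \<open>Multinomial coefficient (length ys; s_0, s_1, ...) where s_a = multiplicity of a in ys.\<close>
definition mcoeff :: "nat list \<Rightarrow> nat" where
  "mcoeff ys = fact (length ys) div (\<Prod>a\<in>set ys. fact (count_list ys a))"

text \<open>The bracket <H^l (+) E^(m-l)>^k_{m,h}; tuples (i_1..i_m) as lists of length m.\<close>
definition bracket :: "nat \<Rightarrow> nat \<Rightarrow> nat \<Rightarrow> int \<Rightarrow> nat" where
  "bracket m h l k = (\<Sum>xs \<in> {xs. length xs = m \<and> sorted (take l xs) \<and> sorted (drop l xs)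
        \<and> int (sum_list xs) = k}.
      (m choose l) * mcoeff (take l xs) * mcoeff (drop l xs)
      * (\<Prod>j<l. Hcount m h (int (xs ! j)))
      * (\<Prod>j\<in>{l..<m}. Ecount m h (int (xs ! j))))"

end

theory Submission
  imports Defs
begin


definition leaves :: "nat \<Rightarrow> nat list option set" where
  "leaves m = {Some [i] | i. i < m}"

lemma len_le1: "length (xs::nat list) \<le> 1 \<longleftrightarrow> xs = [] \<or> (\<exists>i. xs = [i])"
  by (cases xs) auto

lemma Vt1: "Vt m 1 = insert None (insert (Some []) (leaves m))"
  unfolding Vt_def leaves_def using len_le1 by fastforce

lemma Vt0: "Vt m 0 = {None, Some []}"
  unfolding Vt_def by auto

lemma adj1: "adjt m 1 u v \<longleftrightarrow> (u=None \<and> v=Some[]) \<or> (u=Some[] \<and> v=None)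
   \<or> (u=Some[] \<and> v\<in>leaves m) \<or> (u\<in>leaves m \<and> v=Some[])"
  unfolding adjt_def Vt1 by (auto simp: leaves_def)

lemma adj0: "adjt m 0 u v \<longleftrightarrow> (u=None \<and> v=Some[]) \<or> (u=Some[] \<and> v=None)"
  unfolding adjt_def Vt0 by auto

lemma Pk_fix: "cnbhd V adj S = X \<Longrightarrow> Nstar V adj X = {} \<Longrightarrow> Pk V adj k S = X"
  by (induction k) auto

lemma Pinf_fix: "cnbhd V adj S = X \<Longrightarrow> Nstar V adj X = {} \<Longrightarrow> Pinf V adj S = X"
  unfolding Pinf_def using Pk_fix[of V adj S X] by auto

lemma Pk_sub: "S \<subseteq> V \<Longrightarrow> Pk V adj k S \<subseteq> V"
  by (induction k) (auto simp: cnbhd_def Nstar_def)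

lemma PD_if: "S \<subseteq> V \<Longrightarrow> Pk V adj k S = V \<Longrightarrow> power_dom V adj S"
  unfolding power_dom_def Pinf_def using Pk_sub[of S V adj] by blast

lemma notPD_if: "cnbhd V adj S = X \<Longrightarrow> Nstar V adj X = {} \<Longrightarrow> X \<noteq> V \<Longrightarrow> \<not> power_dom V adj S"
  unfolding power_dom_def using Pinf_fix by metis

lemma Vt1': "Vt m (Suc 0) = insert None (insert (Some []) (leaves m))"
  using Vt1 by simp
lemma adj1': "adjt m (Suc 0) u v \<longleftrightarrow> (u=None \<and> v=Some[]) \<or> (u=Some[] \<and> v=None)
   \<or> (u=Some[] \<and> v\<in>leaves m) \<or> (u\<in>leaves m \<and> v=Some[])"
  using adj1 by simp

lemma rnl[simp]: "Some [] \<notin> leaves m" "None \<notin> leaves m"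
  by (auto simp: leaves_def)

lemma c1: "Some [] \<in> S \<Longrightarrow> S \<subseteq> Vt m 1 \<Longrightarrow> cnbhd (Vt m 1) (adjt m 1) S = Vt m 1"
  unfolding cnbhd_def by (auto simp: adj1 Vt1 adj1' Vt1')

lemma c2: "S \<subseteq> leaves m \<Longrightarrow> S \<noteq> {} \<Longrightarrow> cnbhd (Vt m 1) (adjt m 1) S = insert (Some []) S"
  unfolding cnbhd_def by (auto simp: adj1 Vt1 adj1' Vt1')

lemma c3: "cnbhd V adj {} = {}"
  unfolding cnbhd_def by auto

lemma c4: "S \<subseteq> leaves m \<Longrightarrow> cnbhd (Vt m 1) (adjt m 1) (insert None S) = insert None (insert (Some []) S)"
  unfolding cnbhd_def by (auto simp: adj1 Vt1 adj1' Vt1')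

lemma n0: "Nstar V adj {} = {}"
  unfolding Nstar_def by auto

lemma inV[simp]: "None \<in> Vt m (Suc 0)" "Some [] \<in> Vt m (Suc 0)" "x \<in> leaves m \<Longrightarrow> x \<in> Vt m (Suc 0)"
  by (auto simp: Vt1')

lemma leafSome: "x \<in> leaves m \<Longrightarrow> \<exists>y. x = Some y"
  by (auto simp: leaves_def)

lemma adjr[simp]: "adjt m (Suc 0) (Some []) None" "x \<in> leaves m \<Longrightarrow> adjt m (Suc 0) (Some []) x"
  by (auto simp: adj1')

lemma Nstar_sub: "Nstar V adj X \<subseteq> V - X"
  unfolding Nstar_def by auto

lemma n1: assumes "S \<subseteq> leaves m" "x \<in> leaves m - S"
  shows "Nstar (Vt m 1) (adjt m 1) (insert (Some []) S) = {}"
proof (rule ccontr)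
  assume "Nstar (Vt m 1) (adjt m 1) (insert (Some []) S) \<noteq> {}"
  then obtain y a where y: "y \<in> Vt m 1" "y \<notin> insert (Some []) S" and a: "a \<in> insert (Some []) S" "adjt m 1 a y"
    and u: "\<forall>z\<in>Vt m 1. adjt m 1 a z \<and> z \<notin> insert (Some []) S \<longrightarrow> z = y"
    unfolding Nstar_def by blast
  have ar: "a = Some []" using a y assms unfolding adj1 by auto
  have "None \<notin> S" using assms(1) by auto
  have "x \<noteq> Some []" using assms rnl by blast
  have "None = y" using u[rule_format, of None] ar \<open>None \<notin> S\<close> by simp
  moreover have "x = y" using u[rule_format, of x] ar assms leafSome \<open>x \<noteq> Some []\<close> by auto
  ultimately have "x = None" by simp
  thus False using assms rnl(2) by blast
qed

lemma n2: "Nstar (Vt m 1) (adjt m 1) (insert (Some []) (leaves m)) = {None}"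
proof -
  have "None \<in> Nstar (Vt m 1) (adjt m 1) (insert (Some []) (leaves m))"
    unfolding Nstar_def
  proof (intro CollectI conjI bexI[of _ "Some []"])
    show "\<forall>y\<in>Vt m 1. adjt m 1 (Some []) y \<and> y \<notin> insert (Some []) (leaves m) \<longrightarrow> y = None"
      unfolding Vt1 by auto
  qed auto
  moreover have "Nstar (Vt m 1) (adjt m 1) (insert (Some []) (leaves m)) \<subseteq> {None}"
    using Nstar_sub[of "Vt m 1" "adjt m 1" "insert (Some []) (leaves m)"] unfolding Vt1 by auto
  ultimately show ?thesis by blast
qed

lemma n3: assumes "S \<subseteq> leaves m" "x \<in> leaves m - S" "y \<in> leaves m - S" "x \<noteq> y"
  shows "Nstar (Vt m 1) (adjt m 1) (insert None (insert (Some []) S)) = {}"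
proof (rule ccontr)
  let ?X = "insert None (insert (Some []) S)"
  assume "Nstar (Vt m 1) (adjt m 1) ?X \<noteq> {}"
  then obtain w a where y: "w \<in> Vt m 1" "w \<notin> ?X" and a: "a \<in> ?X" "adjt m 1 a w"
    and u: "\<forall>z\<in>Vt m 1. adjt m 1 a z \<and> z \<notin> ?X \<longrightarrow> z = w"
    unfolding Nstar_def by blast
  have ar: "a = Some []" using a y assms unfolding adj1 by auto
  have "x \<noteq> Some []" "y \<noteq> Some []" using assms rnl by blast+
  have "x = w" using u[rule_format, of x] ar assms leafSome \<open>x \<noteq> Some []\<close> by auto
  moreover have "y = w" using u[rule_format, of y] ar assms leafSome \<open>y \<noteq> Some []\<close> by auto
  ultimately show False using assms by auto
qed

lemma n4: assumes "S \<subseteq> leaves m" "leaves m - S = {x}"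
  shows "Nstar (Vt m 1) (adjt m 1) (insert None (insert (Some []) S)) = {x}"
proof -
  let ?X = "insert None (insert (Some []) S)"
  have x: "x \<in> leaves m" "x \<notin> S" using assms by auto
  have "x \<in> Nstar (Vt m 1) (adjt m 1) ?X"
    unfolding Nstar_def
  proof (intro CollectI conjI bexI[of _ "Some []"])
    show "\<forall>y\<in>Vt m 1. adjt m 1 (Some []) y \<and> y \<notin> ?X \<longrightarrow> y = x"
      using assms unfolding Vt1 by auto
  qed (use x leafSome in auto)
  moreover have "Nstar (Vt m 1) (adjt m 1) ?X \<subseteq> {x}"
    using assms Nstar_sub[of "Vt m 1" "adjt m 1" ?X] unfolding Vt1 by auto
  ultimately show ?thesis by blast
qed

lemma inV1: "None \<in> Vt m 1" by (simp add: Vt1)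

lemma inVx: "x \<in> leaves m \<Longrightarrow> x \<in> Vt m 1" by (simp add: Vt1)

lemma neqV2: "x \<in> V \<Longrightarrow> x \<notin> X \<Longrightarrow> X \<noteq> V" by blast

lemma neqV: "None \<in> V \<Longrightarrow> None \<notin> X \<Longrightarrow> X \<noteq> V" by blast

lemma V1r: "Vt m 1 - {None} = insert (Some []) (leaves m)"
  unfolding Vt1 by auto

lemma leaves_ne: "m \<ge> 1 \<Longrightarrow> leaves m \<noteq> {}"
proof -
  assume "m \<ge> 1" hence "Some [0] \<in> leaves m" unfolding leaves_def by auto
  thus ?thesis by blast
qed

lemma PD1:
  assumes S: "S \<subseteq> insert (Some []) (leaves m)" and m: "m \<ge> 1"
  shows "power_dom (Vt m 1) (adjt m 1) S \<longleftrightarrow> Some [] \<in> S \<or> S = leaves m"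
proof
  have SV: "S \<subseteq> Vt m 1" using S unfolding Vt1 by auto
  assume pd: "power_dom (Vt m 1) (adjt m 1) S"
  show "Some [] \<in> S \<or> S = leaves m"
  proof (rule ccontr)
    assume "\<not> (Some [] \<in> S \<or> S = leaves m)"
    hence SL: "S \<subseteq> leaves m" "S \<noteq> leaves m" using S by auto
    show False
    proof (cases "S = {}")
      case True
      have "\<not> power_dom (Vt m 1) (adjt m 1) S"
        by (rule notPD_if[of _ _ _ "{}"]) (simp_all only: True c3 n0 neqV[OF inV1] empty_iff not_False_eq_True)
      thus False using pd by simp
    next
      case False
      obtain x where x: "x \<in> leaves m - S" using SL by auto
      have "\<not> power_dom (Vt m 1) (adjt m 1) S"
        by (rule notPD_if[OF c2[OF SL(1) False] n1[OF SL(1) x]]) (rule neqV[OF inV1], use SL rnl(2) in blast)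
      thus False using pd by simp
    qed
  qed
next
  have SV: "S \<subseteq> Vt m 1" using S unfolding Vt1 by auto
  assume "Some [] \<in> S \<or> S = leaves m"
  then show "power_dom (Vt m 1) (adjt m 1) S"
  proof
    assume "Some [] \<in> S"
    show ?thesis by (rule PD_if[OF SV, of _ 0]) (simp only: Pk.simps c1[OF \<open>Some [] \<in> S\<close> SV])
  next
    assume SL: "S = leaves m"
    have c: "cnbhd (Vt m 1) (adjt m 1) S = insert (Some []) (leaves m)"
      using c2[of S m] SL leaves_ne[OF m] by simp
    have "Pk (Vt m 1) (adjt m 1) (Suc 0) S = insert (Some []) (leaves m) \<union> {None}"
      by (simp only: Pk.simps c n2)
    also have "\<dots> = Vt m 1" unfolding Vt1 by blast
    finally have "Pk (Vt m 1) (adjt m 1) (Suc 0) S = Vt m 1" .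
    thus ?thesis by (rule PD_if[OF SV])
  qed
qed

lemma typeI_iff: "m \<ge> 1 \<Longrightarrow> typeI m 1 S \<longleftrightarrow> S \<subseteq> insert (Some []) (leaves m) \<and> (Some [] \<in> S \<or> S = leaves m)"
  unfolding typeI_def V1r using PD1 by blast

lemma typeII_iff:
  assumes m: "m \<ge> 2"
  shows "typeII m 1 S \<longleftrightarrow> (\<exists>i<m. S = leaves m - {Some [i]})"
proof
  assume t: "typeII m 1 S"
  hence S: "S \<subseteq> insert (Some []) (leaves m)" and np: "\<not> power_dom (Vt m 1) (adjt m 1) S"
    and p: "power_dom (Vt m 1) (adjt m 1) (insert None S)"
    unfolding typeII_def V1r by auto
  have SL: "S \<subseteq> leaves m" "S \<noteq> leaves m" using PD1[OF S] m np S by auto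
  have c: "cnbhd (Vt m 1) (adjt m 1) (insert None S) = insert None (insert (Some []) S)"
    by (rule c4[OF SL(1)])
  obtain x where x: "x \<in> leaves m - S" using SL by auto
  have "leaves m - S = {x}"
  proof (rule ccontr)
    assume "leaves m - S \<noteq> {x}"
    then obtain y where y: "y \<in> leaves m - S" "y \<noteq> x" using x by blast
    have xX: "x \<notin> insert None (insert (Some []) S)" using x rnl leafSome by auto
    have "\<not> power_dom (Vt m 1) (adjt m 1) (insert None S)"
      by (rule notPD_if[OF c n3[OF SL(1) x y(1)] neqV2[OF inVx[OF DiffD1[OF x]] xX]])
         (use y in simp)
    thus False using p by simp
  qed
  moreover obtain i where "x = Some [i]" "i < m" using x unfolding leaves_def by auto
  ultimately show "\<exists>i<m. S = leaves m - {Some [i]}" using SL(1) by blast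
next
  assume "\<exists>i<m. S = leaves m - {Some [i]}"
  then obtain i where i: "i < m" and Sd: "S = leaves m - {Some [i]}" by blast
  have SL: "S \<subseteq> leaves m" using Sd by auto
  have xi: "Some [i] \<in> leaves m" using i unfolding leaves_def by auto
  have SL2: "S \<noteq> leaves m" using Sd xi by auto
  have S: "S \<subseteq> insert (Some []) (leaves m)" using SL by auto
  have np: "\<not> power_dom (Vt m 1) (adjt m 1) S"
    using PD1[OF S] m SL SL2 by auto
  have d: "leaves m - S = {Some [i]}" using Sd xi by auto
  have "Pk (Vt m 1) (adjt m 1) (Suc 0) (insert None S) = insert None (insert (Some []) S) \<union> {Some [i]}"
    by (simp only: Pk.simps c4[OF SL] n4[OF SL d])
  also have "\<dots> = Vt m 1"
  proof -
    have "leaves m = S \<union> {Some [i]}" using d SL by auto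
    thus ?thesis unfolding Vt1 by auto
  qed
  finally have "Pk (Vt m 1) (adjt m 1) (Suc 0) (insert None S) = Vt m 1" .
  hence p: "power_dom (Vt m 1) (adjt m 1) (insert None S)"
    by (rule PD_if[rotated]) (use S in \<open>unfold Vt1, blast\<close>)
  show "typeII m 1 S" unfolding typeII_def V1r using S np p by auto
qed

lemma Pinf_typeII:
  assumes m: "m \<ge> 2" and i: "i < m"
  shows "Pinf (Vt m 1) (adjt m 1) (leaves m - {Some [i]}) = insert (Some []) (leaves m - {Some [i]})"
proof -
  let ?S = "leaves m - {Some [i]}"
  have "\<exists>j. j < m \<and> j \<noteq> i"
  proof (cases "i = 0")
    case True thus ?thesis using m by (intro exI[of _ 1]) auto
  next
    case False thus ?thesis using m by (intro exI[of _ 0]) auto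
  qed
  then obtain j where j: "j < m" "j \<noteq> i" by blast
  have "Some [j] \<in> ?S" using j unfolding leaves_def by auto
  hence ne: "?S \<noteq> {}" by blast
  have xi: "Some [i] \<in> leaves m - ?S" using i unfolding leaves_def by auto
  show ?thesis by (rule Pinf_fix[OF c2 n1[OF _ xi]]) (use ne in auto)
qed



lemma count_rep: "count_list (replicate n a) a = n"
  by (induction n) auto

lemma mcoeff_rep: "mcoeff (replicate n a) = 1"
proof (cases "n = 0")
  case True thus ?thesis by (simp add: mcoeff_def)
next
  case False
  hence "set (replicate n a) = {a}" by simp
  thus ?thesis using False by (simp add: mcoeff_def count_rep)
qed

lemma V0r: "Vt m 0 - {None} = {Some []}"
  unfolding Vt0 by auto

lemma typeI0: "typeI m 0 S \<longleftrightarrow> S = {Some []}"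
proof
  assume t: "typeI m 0 S"
  hence S: "S \<subseteq> {Some []}" and p: "power_dom (Vt m 0) (adjt m 0) S" unfolding typeI_def V0r by auto
  have "S \<noteq> {}"
  proof
    assume "S = {}"
    hence "\<not> power_dom (Vt m 0) (adjt m 0) S"
      by (intro notPD_if[of _ _ _ "{}"]) (auto simp: c3 n0 Vt0)
    thus False using p by simp
  qed
  thus "S = {Some []}" using S by auto
next
  assume S: "S = {Some []}"
  have "Pk (Vt m 0) (adjt m 0) 0 S = Vt m 0"
    unfolding S by (auto simp: cnbhd_def Vt0 adj0)
  hence "power_dom (Vt m 0) (adjt m 0) S" by (rule PD_if[rotated]) (auto simp: S Vt0)
  thus "typeI m 0 S" unfolding typeI_def V0r using S by auto
qed

lemma typeII0: "typeII m 0 S \<longleftrightarrow> S = {}"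
proof
  assume t: "typeII m 0 S"
  hence S: "S \<subseteq> {Some []}" and np: "\<not> power_dom (Vt m 0) (adjt m 0) S" unfolding typeII_def V0r by auto
  have "S \<noteq> {Some []}" using np typeI0[of m S] unfolding typeI_def by auto
  thus "S = {}" using S by auto
next
  assume S: "S = {}"
  have np: "\<not> power_dom (Vt m 0) (adjt m 0) S"
    by (intro notPD_if[of _ _ _ "{}"]) (auto simp: S c3 n0 Vt0)
  have "Pk (Vt m 0) (adjt m 0) 0 (insert None S) = Vt m 0"
    unfolding S by (auto simp: cnbhd_def Vt0 adj0)
  hence "power_dom (Vt m 0) (adjt m 0) (insert None S)" by (rule PD_if[rotated]) (auto simp: S Vt0)
  thus "typeII m 0 S" unfolding typeII_def V0r using S np by auto
qed

lemma E0: "Ecount m 0 k = (if k = 1 then 1 else 0)"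
proof -
  have "{S. typeI m 0 S \<and> int (card S) = k} = (if k = 1 then {{Some []}} else {})"
    by (auto simp: typeI0)
  thus ?thesis unfolding Ecount_def by simp
qed

lemma H0: "Hcount m 0 k = (if k = 0 then 1 else 0)"
proof -
  have "{S. typeII m 0 S \<and> int (card S) = k} = (if k = 0 then {{}} else {})"
    by (auto simp: typeII0)
  thus ?thesis unfolding Hcount_def by simp
qed

lemma bracket0:
  assumes lm: "l \<le> m"
  shows "bracket m 0 l k = (if k = int (m - l) then m choose l else 0)"
proof -
  define A where "A = {xs. length xs = m \<and> sorted (take l xs) \<and> sorted (drop l xs) \<and> int (sum_list xs) = k}"
  define f where "f = (\<lambda>xs. (m choose l) * mcoeff (take l xs) * mcoeff (drop l xs)
      * (\<Prod>j<l. Hcount m 0 (int (xs ! j)))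
      * (\<Prod>j\<in>{l..<m}. Ecount m 0 (int (xs ! j))))"
  define x0 where "x0 = replicate l (0::nat) @ replicate (m - l) 1"
  have b: "bracket m 0 l k = sum f A" unfolding bracket_def A_def f_def by simp
  have finA: "finite A"
  proof (rule finite_subset)
    show "A \<subseteq> {xs. set xs \<subseteq> {..nat k} \<and> length xs = m}"
      unfolding A_def using member_le_sum_list by fastforce
  qed (rule finite_lists_length_eq, simp)
  have z: "f xs = 0" if "xs \<in> A" "xs \<noteq> x0" for xs
  proof (rule ccontr)
    assume nz: "f xs \<noteq> 0"
    have h: "(\<Prod>j<l. Hcount m 0 (int (xs ! j))) \<noteq> 0" using nz unfolding f_def by auto
    have e: "(\<Prod>j\<in>{l..<m}. Ecount m 0 (int (xs ! j))) \<noteq> 0" using nz unfolding f_def by auto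
    have h0: "xs ! j = 0" if "j < l" for j
      using h that by (auto simp: H0 split: if_splits)
    have e1: "xs ! j = 1" if "l \<le> j" "j < m" for j
      using e that by (auto simp: E0 split: if_splits)
    have "xs = x0"
    proof (rule nth_equalityI)
      show "length xs = length x0" using \<open>xs \<in> A\<close> lm unfolding A_def x0_def by simp
      fix i assume "i < length xs"
      hence i: "i < m" using \<open>xs \<in> A\<close> unfolding A_def by simp
      show "xs ! i = x0 ! i"
        using h0 e1 i lm unfolding x0_def by (auto simp: nth_append)
    qed
    thus False using that by simp
  qed
  have s: "sum f A = sum f (A \<inter> {x0})"
    by (rule sum.mono_neutral_right) (use finA z in auto)
  have tk: "take l x0 = replicate l 0" "drop l x0 = replicate (m - l) 1"
    unfolding x0_def by auto
  have fx0: "f x0 = m choose l"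
  proof -
    have "(\<Prod>j<l. Hcount m 0 (int (x0 ! j))) = 1"
      by (rule prod.neutral) (auto simp: H0 x0_def nth_append)
    moreover have "(\<Prod>j\<in>{l..<m}. Ecount m 0 (int (x0 ! j))) = 1"
      by (rule prod.neutral) (use lm in \<open>auto simp: E0 x0_def nth_append\<close>)
    ultimately show ?thesis unfolding f_def tk by (simp add: mcoeff_rep)
  qed
  have "x0 \<in> A \<longleftrightarrow> k = int (m - l)"
    unfolding A_def x0_def using lm by (auto simp: sum_list_replicate)
  thus ?thesis unfolding b s using fx0 by auto
qed



lemma leaves_img: "leaves m = (\<lambda>i. Some [i]) ` {..<m}"
  unfolding leaves_def by auto

lemma card_leaves: "card (leaves m) = m"
  unfolding leaves_img by (subst card_image) (auto simp: inj_on_def)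

lemma fin_leaves: "finite (leaves m)"
  unfolding leaves_img by simp

lemma H1: assumes m: "m \<ge> 2"
  shows "Hcount m 1 (int k) = (if k = m - 1 then m else 0)"
proof -
  have cd: "card (leaves m - {Some [i]}) = m - 1" if "i < m" for i
  proof -
    have "Some [i] \<in> leaves m" using that unfolding leaves_def by auto
    thus ?thesis by (simp add: card_Diff_singleton fin_leaves card_leaves)
  qed
  have eq: "{S. typeII m 1 S \<and> int (card S) = int k} = {S. \<exists>i<m. S = leaves m - {Some [i]} \<and> card S = k}"
    using typeII_iff[OF m] by auto
  show ?thesis
  proof (cases "k = m - 1")
    case True
    have "{S. \<exists>i<m. S = leaves m - {Some [i]} \<and> card S = k} = (\<lambda>i. leaves m - {Some [i]}) ` {..<m}"
      using cd True by auto
    moreover have "inj_on (\<lambda>i. leaves m - {Some [i]}) {..<m}"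
    proof (rule inj_onI)
      fix i j assume ij: "i \<in> {..<m}" "j \<in> {..<m}" "leaves m - {Some [i]} = leaves m - {Some [j]}"
      show "i = j"
      proof (rule ccontr)
        assume "i \<noteq> j"
        hence "Some [i] \<in> leaves m - {Some [j]}" using ij(1) unfolding leaves_def by auto
        thus False using ij(3) by auto
      qed
    qed
    ultimately show ?thesis unfolding Hcount_def eq using True by (simp add: card_image)
  next
    case False
    have "{S. \<exists>i<m. S = leaves m - {Some [i]} \<and> card S = k} = {}"
      using cd False by auto
    thus ?thesis unfolding Hcount_def eq using False by simp
  qed
qed

lemma E1: assumes m: "m \<ge> 2"
  shows "Ecount m 1 (int k) = (if k = m then 1 else 0) + (if k \<ge> 1 then m choose (k - 1) else 0)"
proof -
  let ?L = "leaves m" and ?r = "Some [] :: nat list option"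
  define A where "A = {S. S \<subseteq> insert ?r ?L \<and> ?r \<in> S \<and> card S = k}"
  define B where "B = {S. S = ?L \<and> card S = k}"
  have eq: "{S. typeI m 1 S \<and> int (card S) = int k} = A \<union> B"
    unfolding A_def B_def using typeI_iff[of m] m by auto
  have disj: "A \<inter> B = {}" unfolding A_def B_def by auto
  have cB: "card B = (if k = m then 1 else 0)"
  proof -
    have "B = (if k = m then {?L} else {})" unfolding B_def by (auto simp: card_leaves)
    thus ?thesis by simp
  qed
  have fA: "finite A"
    by (rule finite_subset[of _ "Pow (insert ?r ?L)"]) (auto simp: A_def fin_leaves)
  have fB: "finite B" unfolding B_def by simp
  have cA: "card A = (if k \<ge> 1 then m choose (k - 1) else 0)"
  proof (cases "k \<ge> 1")
    case False
    have "A = {}"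
    proof -
      { fix S assume "S \<in> A"
        hence "finite S" "?r \<in> S" "card S = k" unfolding A_def using fin_leaves finite_subset by auto
        hence "card S > 0" using card_gt_0_iff by blast
        hence False using False \<open>card S = k\<close> by simp }
      thus ?thesis by blast
    qed
    thus ?thesis using False by simp
  next
    case True
    have img: "A = insert ?r ` {T. T \<subseteq> ?L \<and> card T = k - 1}"
    proof
      show "A \<subseteq> insert ?r ` {T. T \<subseteq> ?L \<and> card T = k - 1}"
      proof
        fix S assume S: "S \<in> A"
        hence fS: "finite S" unfolding A_def using fin_leaves finite_subset by auto
        have rS: "?r \<in> S" using S unfolding A_def by simp
        have Seq: "S = insert ?r (S - {?r})" using insert_Diff[OF rS] by simp
        have T: "S - {?r} \<subseteq> ?L" "card (S - {?r}) = k - 1"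
          using S fS unfolding A_def by auto
        show "S \<in> insert ?r ` {T. T \<subseteq> ?L \<and> card T = k - 1}"
          by (rule image_eqI[of S "insert ?r" "S - {?r}"]) (use Seq T in simp_all)
      qed
    next
      show "insert ?r ` {T. T \<subseteq> ?L \<and> card T = k - 1} \<subseteq> A"
      proof
        fix S assume "S \<in> insert ?r ` {T. T \<subseteq> ?L \<and> card T = k - 1}"
        then obtain T where T: "T \<subseteq> ?L" "card T = k - 1" "S = insert ?r T" by blast
        have "finite T" "?r \<notin> T" using T(1) fin_leaves finite_subset by auto
        thus "S \<in> A" unfolding A_def using T True by auto
      qed
    qed
    have inj: "inj_on (insert ?r) {T. T \<subseteq> ?L \<and> card T = k - 1}"
    proof (rule inj_onI)
      fix X Y assume XY: "X \<in> {T. T \<subseteq> ?L \<and> card T = k - 1}" "Y \<in> {T. T \<subseteq> ?L \<and> card T = k - 1}"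
        "insert ?r X = insert ?r Y"
      have "?r \<notin> X" "?r \<notin> Y" using XY(1,2) rnl(1) by auto
      thus "X = Y" using XY(3) insert_ident by metis
    qed
    have "card A = m choose (k - 1)"
      unfolding img by (subst card_image[OF inj]) (simp add: n_subsets fin_leaves card_leaves)
    thus ?thesis using True by simp
  qed
  show ?thesis unfolding Ecount_def eq using card_Un_disjoint[OF fA fB disj] cA cB by simp
qed

lemma sumlem: "(\<Sum>l=0..m. (if int k - 1 = int (m - l) then m choose l else 0)) =
   (if k \<ge> 1 then m choose (k - 1) else (0::nat))"
proof (cases "k \<ge> 1")
  case False
  hence k0: "k = 0" by simp
  have nk: "\<not> (int k - 1 = int (m - l))" for l using k0 by linarith
  have "(\<Sum>l=0..m. (if int k - 1 = int (m - l) then m choose l else (0::nat))) = 0"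
    by (intro sum.neutral ballI) (simp only: nk if_False)
  thus ?thesis using False by simp
next
  case True
  have c: "(int k - 1 = int (m - l)) = (l = m - (k - 1) \<and> k - 1 \<le> m)" if "l \<le> m" for l
    using True that by linarith
  have "(\<Sum>l=0..m. (if int k - 1 = int (m - l) then m choose l else 0)) =
        (\<Sum>l=0..m. (if l = m - (k - 1) then (if k - 1 \<le> m then m choose l else 0) else 0))"
  proof (rule sum.cong[OF refl])
    fix l assume "l \<in> {0..m}"
    hence lm: "l \<le> m" by simp
    show "(if int k - 1 = int (m - l) then m choose l else 0) =
        (if l = m - (k - 1) then (if k - 1 \<le> m then m choose l else 0) else 0)"
      unfolding c[OF lm] by simp
  qed
  also have "\<dots> = (if k - 1 \<le> m then m choose (m - (k - 1)) else 0)"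
    by (simp add: sum.delta)
  also have "\<dots> = m choose (k - 1)"
    by (simp add: binomial_symmetric[symmetric])
  finally show ?thesis using True by simp
qed

theorem mainTheorem5:
  fixes m :: nat
  assumes "m \<ge> 2"
  shows "(\<forall>S. typeII m 1 S \<longrightarrow>
            (\<exists>i<m. cnbhd (Vt m 1) (adjt m 1) {Some []} - Pinf (Vt m 1) (adjt m 1) S
                   = {None, Some [i]}))
       \<and> (\<forall>k::nat.
            Hcount m 1 (int k) = bracket m 0 1 (int k)
          \<and> Ecount m 1 (int k) = bracket m 0 0 (int k)
               + (\<Sum>l=0..m. bracket m 0 l (int k - 1)))"
proof (intro conjI allI impI)
  fix S assume "typeII m 1 S"
  then obtain i where i: "i < m" and S: "S = leaves m - {Some [i]}"
    using typeII_iff[OF assms] by blast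
  have P: "Pinf (Vt m 1) (adjt m 1) S = insert (Some []) (leaves m - {Some [i]})"
    unfolding S by (rule Pinf_typeII[OF assms i])
  have C: "cnbhd (Vt m 1) (adjt m 1) {Some []} = Vt m 1" by (rule c1) (auto simp: Vt1)
  have "Some [i] \<in> leaves m" using i unfolding leaves_def by auto
  hence D: "Vt m 1 - insert (Some []) (leaves m - {Some [i]}) = {None, Some [i]}"
    unfolding Vt1 by auto
  have "cnbhd (Vt m 1) (adjt m 1) {Some []} - Pinf (Vt m 1) (adjt m 1) S = {None, Some [i]}"
    unfolding P C by (rule D)
  thus "\<exists>i<m. cnbhd (Vt m 1) (adjt m 1) {Some []} - Pinf (Vt m 1) (adjt m 1) S = {None, Some [i]}"
    using i by blast
next
  fix k :: nat
  show "Hcount m 1 (int k) = bracket m 0 1 (int k)"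
    using H1[OF assms, of k] bracket0[of 1 m "int k"] assms by auto
next
  fix k :: nat
  have "(\<Sum>l=0..m. bracket m 0 l (int k - 1)) = (\<Sum>l=0..m. (if int k - 1 = int (m - l) then m choose l else 0))"
    by (rule sum.cong) (auto simp: bracket0)
  also have "\<dots> = (if k \<ge> 1 then m choose (k - 1) else 0)" by (rule sumlem)
  finally show "Ecount m 1 (int k) = bracket m 0 0 (int k) + (\<Sum>l=0..m. bracket m 0 l (int k - 1))"
    using E1[OF assms, of k] bracket0[of 0 m "int k"] by auto
qed


end
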